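(* Let $(G_n)$ be a sequence of graphs satisfying conditions (1')–(3') below. Then for all sufficiently large $n$, every subset $U\subseteq V$ with $1\le|U|\le\frac{2\overline\lambda^2n}{d^2}$ satisfies $$|N(U)|>\frac{(d-2\overline\lambda)^2}{5\overline\lambda^2}|U|.$$
   Context: $G_n$ has vertex set $V$, $|V|=n$, average degree $d$, minimum degree $\delta$, maximum degree $\Delta$. For $U,W\subseteq V$, $e(U,W)$ is the number of ordered pairs $(u,w)\in U\times W$ with $u$ adjacent to $w$; $N(U)$ is the set of vertices not in $U$ having a neighbor in $U$. A number $\overline\lambda=\overline\lambda(n)>0$ controls the edge distribution of $G_n$ if for all $U,W\subseteq V$: $\left|e(U,W)-\frac{d}{n}|U||W|\right|\le\overline\lambda\sqrt{|U||W|}$. Conditions: there is such $\overline\lambda$ with (1') $\Delta-\delta\le\overline\lambda$; (2') $\frac{d}{\overline\lambda}/\log^2n\to\infty$; (3') $\log d\cdot\log\frac{d}{\overline\lambda}/\log n\to\infty$. *)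

theory Defs
  imports Complex_Main
begin

definition simple_graph_on :: "nat \<Rightarrow> (nat \<Rightarrow> nat \<Rightarrow> bool) \<Rightarrow> bool" where
  "simple_graph_on n A \<longleftrightarrow>
     (\<forall>u<n. \<forall>w<n. A u w \<longleftrightarrow> A w u) \<and> (\<forall>u<n. \<not> A u u)"

definition deg :: "nat \<Rightarrow> (nat \<Rightarrow> nat \<Rightarrow> bool) \<Rightarrow> nat \<Rightarrow> nat" where
  "deg n A v = card {w. w < n \<and> A v w}"

definition avg_deg :: "nat \<Rightarrow> (nat \<Rightarrow> nat \<Rightarrow> bool) \<Rightarrow> real" where
  "avg_deg n A = (\<Sum>v<n. real (deg n A v)) / real n"

definition min_deg :: "nat \<Rightarrow> (nat \<Rightarrow> nat \<Rightarrow> bool) \<Rightarrow> nat" where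
  "min_deg n A = Min (deg n A ` {..<n})"

definition max_deg :: "nat \<Rightarrow> (nat \<Rightarrow> nat \<Rightarrow> bool) \<Rightarrow> nat" where
  "max_deg n A = Max (deg n A ` {..<n})"

definition e_pairs :: "(nat \<Rightarrow> nat \<Rightarrow> bool) \<Rightarrow> nat set \<Rightarrow> nat set \<Rightarrow> nat" where
  "e_pairs A U W = card {(u, w). u \<in> U \<and> w \<in> W \<and> A u w}"

definition nbhd :: "nat \<Rightarrow> (nat \<Rightarrow> nat \<Rightarrow> bool) \<Rightarrow> nat set \<Rightarrow> nat set" where
  "nbhd n A U = {v. v < n \<and> v \<notin> U \<and> (\<exists>u\<in>U. A u v)}"

definition controls_edge_distribution ::
  "nat \<Rightarrow> (nat \<Rightarrow> nat \<Rightarrow> bool) \<Rightarrow> real \<Rightarrow> bool" where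
  "controls_edge_distribution n A lam \<longleftrightarrow>
     (\<forall>U W. U \<subseteq> {..<n} \<longrightarrow> W \<subseteq> {..<n} \<longrightarrow>
        \<bar>real (e_pairs A U W) - avg_deg n A / real n * real (card U) * real (card W)\<bar>
          \<le> lam * sqrt (real (card U) * real (card W)))"

end

theory Submission
  imports Defs
begin

lemma key_real:
  fixes r t :: real
  assumes r: "r \<ge> 30" and t: "t \<ge> 0" and h: "r - 1 \<le> 2 * t / r + sqrt t"
  shows "t > 1 + (r - 2)^2 / 5"
proof (rule ccontr)
  assume "\<not> ?thesis"
  hence tl: "t \<le> 1 + (r-2)^2/5" by simp
  have "(r-2)^2 \<le> r^2" using r by (intro power_mono) auto
  hence t2: "t \<le> 1 + r^2/5" using tl by linarith
  have "t \<le> (1 + r/2)^2"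
  proof -
    have a: "0 \<le> r*r" using r by simp
    have b: "t*5 \<le> r*r+5" using t2 by (simp add: power2_eq_square field_simps)
    have "t \<le> 1 + r + r*r/4" using a b r by linarith
    thus ?thesis by (simp add: power2_eq_square field_simps)
  qed
  hence s: "sqrt t \<le> 1 + r/2" using r by (metis real_sqrt_le_iff real_sqrt_abs abs_of_nonneg add_nonneg_nonneg divide_nonneg_nonneg zero_le_one order_trans zero_le_numeral r linorder_not_le less_le_trans)
  have "2 * t / r \<le> 2 * (1 + r^2/5) / r" using t2 r by (simp add: divide_right_mono)
  also have "\<dots> = 2/r + 2*r/5" using r by (simp add: field_simps power2_eq_square)
  also have "2/r \<le> 1/2" using r by (simp add: field_simps)
  finally have "2*t/r \<le> 1/2 + 2*r/5" by simp
  with s h r show False by linarith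
qed

lemma e_pairs_nbhd:
  assumes U: "U \<subseteq> {..<n}"
  shows "e_pairs A U (U \<union> nbhd n A U) = (\<Sum>u\<in>U. deg n A u)"
proof -
  have fU: "finite U" using U finite_subset by blast
  have "{(u, w). u \<in> U \<and> w \<in> U \<union> nbhd n A U \<and> A u w} = Sigma U (\<lambda>u. {w. w < n \<and> A u w})"
    using U unfolding nbhd_def by auto
  thus ?thesis unfolding e_pairs_def deg_def using fU by (simp add: card_SigmaI)
qed

lemma min_deg_le: "v < n \<Longrightarrow> min_deg n A \<le> deg n A v"
  unfolding min_deg_def by (rule Min_le) auto

lemma avg_le_max:
  assumes "n > 0" shows "avg_deg n A \<le> real (max_deg n A)"
proof -
  have "\<And>v. v < n \<Longrightarrow> deg n A v \<le> max_deg n A"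
    unfolding max_deg_def by (rule Max_ge) auto
  hence "(\<Sum>v<n. real (deg n A v)) \<le> (\<Sum>v<n. real (max_deg n A))"
    by (intro sum_mono) auto
  thus ?thesis using assms unfolding avg_deg_def by (simp add: divide_le_eq mult.commute)
qed

theorem corollary4:
  fixes G :: "nat \<Rightarrow> nat \<Rightarrow> nat \<Rightarrow> bool" and lam :: "nat \<Rightarrow> real"
  assumes graphs: "\<And>n. simple_graph_on n (G n)"
    and lam_pos: "\<And>n. lam n > 0"
    and control: "\<And>n. controls_edge_distribution n (G n) (lam n)"
    and cond1: "\<And>n. real (max_deg n (G n)) - real (min_deg n (G n)) \<le> lam n"
    and cond2: "filterlim (\<lambda>n. (avg_deg n (G n) / lam n) / (ln (real n))\<^sup>2) at_top sequentially"
    and cond3: "filterlim (\<lambda>n. ln (avg_deg n (G n)) * ln (avg_deg n (G n) / lam n) / ln (real n))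
                  at_top sequentially"
  shows "\<forall>\<^sub>F n in sequentially. \<forall>U. U \<subseteq> {..<n} \<longrightarrow> 1 \<le> card U \<longrightarrow>
           real (card U) \<le> 2 * (lam n)\<^sup>2 * real n / (avg_deg n (G n))\<^sup>2 \<longrightarrow>
           real (card (nbhd n (G n) U)) >
             (avg_deg n (G n) - 2 * lam n)\<^sup>2 / (5 * (lam n)\<^sup>2) * real (card U)"
proof -
  have ev1: "\<forall>\<^sub>F n in sequentially. (avg_deg n (G n) / lam n) / (ln (real n))\<^sup>2 \<ge> 30"
    using cond2 by (simp add: filterlim_at_top)
  have ev2: "\<forall>\<^sub>F n in sequentially. n \<ge> (3::nat)" by (rule eventually_ge_at_top)
  show ?thesis using ev1 ev2
  proof eventually_elim
    case (elim n)
    define d where "d = avg_deg n (G n)"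
    define l where "l = lam n"
    have lp: "l > 0" using lam_pos l_def by simp
    have "ln (real n) \<ge> ln 3" using elim(2) by simp
    moreover have "ln (3::real) \<ge> 1"
      using ln_ge_iff[of 3 1] exp_le by simp
    ultimately have ln1: "(ln (real n))^2 \<ge> 1" by (simp add: one_le_power)
    have q: "(d / l) / (ln (real n))^2 \<ge> 30" using elim(1) d_def l_def by simp
    have r30: "d / l \<ge> 30"
    proof -
      have "(ln (real n))^2 \<noteq> 0" using ln1 by linarith
      hence "d / l = ((d / l) / (ln (real n))^2) * (ln (real n))^2" by simp
      also have "\<dots> \<ge> 30 * 1" using q ln1 by (intro mult_mono) auto
      finally show ?thesis by simp
    qed
    hence dpos: "d > 0" using lp by (simp add: le_divide_eq)
    have npos: "n > 0" using elim(2) by simp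
    show ?case
    proof (intro allI impI)
      fix U assume U: "U \<subseteq> {..<n}" and U1: "1 \<le> card U"
        and Usm: "real (card U) \<le> 2 * (lam n)\<^sup>2 * real n / (avg_deg n (G n))\<^sup>2"
      define N where "N = nbhd n (G n) U"
      define u where "u = real (card U)"
      define s where "s = real (card (U \<union> N))"
      have fU: "finite U" using U finite_subset by blast
      have NV: "N \<subseteq> {..<n}" unfolding N_def nbhd_def by auto
      have fN: "finite N" using NV finite_subset by blast
      have disj: "U \<inter> N = {}" unfolding N_def nbhd_def by auto
      have sN: "s = u + real (card N)" unfolding s_def u_def
        using card_Un_disjoint[OF fU fN disj] by simp
      have upos: "u \<ge> 1" using U1 u_def by simp
      have spos: "s \<ge> u" using sN by simp
      have E: "real (e_pairs (G n) U (U \<union> N)) = (\<Sum>v\<in>U. real (deg n (G n) v))"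
        using e_pairs_nbhd[OF U, of "G n"] N_def by simp
      have "(\<Sum>v\<in>U. real (min_deg n (G n))) \<le> (\<Sum>v\<in>U. real (deg n (G n) v))"
        using U min_deg_le by (intro sum_mono) auto
      hence Emin: "u * real (min_deg n (G n)) \<le> real (e_pairs (G n) U (U \<union> N))"
        using E u_def by (simp add: mult.commute)
      have "d \<le> real (max_deg n (G n))" using avg_le_max[OF npos] d_def by simp
      hence dmin: "d - l \<le> real (min_deg n (G n))" using cond1[of n] l_def by simp
      have C: "real (e_pairs (G n) U (U \<union> N)) - d / real n * u * s \<le> l * sqrt (u * s)"
        using control[of n] U NV unfolding controls_edge_distribution_def d_def l_def u_def s_def
        by (metis (no_types, lifting) Un_subset_iff abs_le_D1)
      have A: "(d - l) * u \<le> d / real n * u * s + l * sqrt (u * s)"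
        using Emin dmin C upos by (smt (verit) mult.commute mult_right_mono)
      define t where "t = s / u"
      have t0: "t \<ge> 0" using t_def upos spos by simp
      have su: "s = t * u" using t_def upos by simp
      have sq: "sqrt (u * s) = u * sqrt t"
        using su upos by (simp add: real_sqrt_mult power2_eq_square[symmetric] mult.commute)
      have usm: "u \<le> 2 * l^2 * real n / d^2" using Usm u_def l_def d_def by simp
      have "d / real n * u * s = (d / real n * u) * t * u" using su by simp
      also have "d / real n * u \<le> 2 * l^2 / d"
      proof -
        have "d / real n * u \<le> d / real n * (2 * l^2 * real n / d^2)"
          using usm dpos npos by (intro mult_left_mono) auto
        also have "\<dots> = 2 * l^2 / d" using dpos npos by (simp add: field_simps power2_eq_square)
        finally show ?thesis .
      qed
      hence "(d / real n * u) * t * u \<le> (2 * l^2 / d) * t * u"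
        using t0 upos by (intro mult_right_mono) auto
      finally have B: "d / real n * u * s \<le> (2 * l^2 / d) * t * u" .
      have "(d - l) * u \<le> ((2 * l^2 / d) * t + l * sqrt t) * u"
        using A B sq by (simp add: algebra_simps)
      hence "d - l \<le> (2 * l^2 / d) * t + l * sqrt t" using upos by simp
      hence "(d - l) / l \<le> ((2 * l^2 / d) * t + l * sqrt t) / l" using lp by (simp add: divide_right_mono)
      moreover have "(d - l) / l = d / l - 1" using lp by (simp add: field_simps)
      moreover have "((2 * l^2 / d) * t + l * sqrt t) / l = 2 * t / (d / l) + sqrt t"
        using lp dpos by (simp add: field_simps power2_eq_square)
      ultimately have "d / l - 1 \<le> 2 * t / (d / l) + sqrt t" by simp
      from key_real[OF r30 t0 this]
      have tk: "t > 1 + (d / l - 2)^2 / 5" .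
      have "(d - 2 * l)^2 / (5 * l^2) = (d / l - 2)^2 / 5" using lp
        by (simp add: field_simps power2_eq_square)
      moreover have "(d / l - 2)^2 / 5 < t - 1" using tk by simp
      ultimately have "(d - 2 * l)^2 / (5 * l^2) < t - 1" by simp
      hence "(d - 2 * l)^2 / (5 * l^2) * u < (t - 1) * u" using upos
        by (intro mult_strict_right_mono) auto
      also have "(t - 1) * u = real (card N)" using su sN by (simp add: algebra_simps)
      finally show "real (card (nbhd n (G n) U)) >
             (avg_deg n (G n) - 2 * lam n)\<^sup>2 / (5 * (lam n)\<^sup>2) * real (card U)"
        using N_def d_def l_def u_def by simp
    qed
  qed
qed

end
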